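(* If $v/u=q^{-r}$ for some nonnegative integer $r$, then \[ {}_3\phi_2\left(\begin{array}{c}y/x,\ q/abt,\ q/avt\\ yq/a,\ q/aut\end{array};q,\frac{xbvt}{u}\right)=\frac{(ybt,xq/a;q)_\infty}{(xbt,yq/a;q)_\infty}\,{}_3\phi_2\left(\begin{array}{c}y/x,\ v/u,\ q/abt\\ q/xbt,\ q/aut\end{array};q,q\right). \]
   Context: $q$ is a fixed complex number with $0<|q|<1$. $(a;q)_\infty=\prod_{k\ge0}(1-aq^k)$, $(a;q)_n=(a;q)_\infty/(aq^n;q)_\infty$, $(a_1,\dots,a_m;q)_n=\prod_i(a_i;q)_n$. ${}_r\phi_s\left(\begin{array}{c}a_1,\dots,a_r\\ b_1,\dots,b_s\end{array};q,x\right)=\sum_{n\ge0}\frac{(a_1,\dots,a_r;q)_n}{(q,b_1,\dots,b_s;q)_n}\big[(-1)^nq^{\binom n2}\big]^{1+s-r}x^n$. *)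

theory Defs
  imports "HOL-Analysis.Analysis"
begin

definition qpoch :: "complex \<Rightarrow> complex \<Rightarrow> nat \<Rightarrow> complex" where
  "qpoch a q n = (\<Prod>k<n. (1 - a * q ^ k))"

definition qpoch_inf :: "complex \<Rightarrow> complex \<Rightarrow> complex" where
  "qpoch_inf a q = (\<Prod>k. (1 - a * q ^ k))"

definition phi_term :: "complex list \<Rightarrow> complex list \<Rightarrow> complex \<Rightarrow> complex \<Rightarrow> nat \<Rightarrow> complex" where
  "phi_term as bs q z n =
     (\<Prod>a\<leftarrow>as. qpoch a q n) / (qpoch q q n * (\<Prod>b\<leftarrow>bs. qpoch b q n))
     * (((-1) ^ n * q ^ (n choose 2)) powi (1 + int (length bs) - int (length as))) * z ^ n"

definition basic_hyp :: "complex list \<Rightarrow> complex list \<Rightarrow> complex \<Rightarrow> complex \<Rightarrow> complex" where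
  "basic_hyp as bs q z = (\<Sum>n. phi_term as bs q z n)"

end

theory Submission imports Defs begin

lemma qpoch_0[simp]: "qpoch a q 0 = 1" by (simp add: qpoch_def)
lemma qpoch_Suc: "qpoch a q (Suc n) = qpoch a q n * (1 - a * q ^ n)"
  by (simp add: qpoch_def lessThan_Suc mult.commute)

lemma qpoch_add: "qpoch a q (k + m) = qpoch a q k * qpoch (a * q ^ k) q m"
  by (induction m) (simp_all add: qpoch_Suc power_add mult.assoc)

lemma qpoch_LIMSEQ:
  assumes "cmod q < 1"
  shows "(\<lambda>n. qpoch a q n) \<longlonglongrightarrow> qpoch_inf a q"
proof -
  have "summable (\<lambda>k. norm ((1 - a * q ^ k) - 1))"
    using assms by (simp add: norm_mult norm_power summable_geometric)
  then have "abs_convergent_prod (\<lambda>k. 1 - a * q ^ k)"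
    by (rule summable_imp_abs_convergent_prod)
  then have "convergent_prod (\<lambda>k. 1 - a * q ^ k)"
    by (rule abs_convergent_prod_imp_convergent_prod)
  then have "(\<lambda>n. \<Prod>i\<le>n. 1 - a * q ^ i) \<longlonglongrightarrow> qpoch_inf a q"
    unfolding qpoch_inf_def by (rule convergent_prod_LIMSEQ)
  then have "(\<lambda>n. qpoch a q (Suc n)) \<longlonglongrightarrow> qpoch_inf a q"
    by (simp add: qpoch_def lessThan_Suc_atMost)
  then show ?thesis by (rule LIMSEQ_imp_Suc)
qed

lemma qpoch_inf_shift:
  assumes "cmod q < 1"
  shows "qpoch_inf a q = qpoch a q k * qpoch_inf (a * q ^ k) q"
proof -
  have "(\<lambda>m. qpoch a q (m + k)) \<longlonglongrightarrow> qpoch_inf a q"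
    using qpoch_LIMSEQ[OF assms] by (rule LIMSEQ_ignore_initial_segment)
  moreover have "(\<lambda>m. qpoch a q (m + k)) \<longlonglongrightarrow> qpoch a q k * qpoch_inf (a * q ^ k) q"
    unfolding add.commute[of _ k] qpoch_add
    by (intro tendsto_mult tendsto_const qpoch_LIMSEQ assms)
  ultimately show ?thesis by (rule LIMSEQ_unique)
qed


lemma qpoch_qq_nonzero:
  assumes "cmod q < 1"
  shows "qpoch q q n \<noteq> 0"
proof -
  have "1 - q * q ^ k \<noteq> 0" for k
  proof
    assume "1 - q * q ^ k = 0"
    then have "q ^ Suc k = 1" by simp
    then have "cmod q ^ Suc k = 1" by (metis norm_one norm_power)
    moreover have "cmod q ^ Suc k < 1"
    proof -
      have "cmod q ^ k \<le> 1" using assms by (simp add: power_le_one)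
      then have "cmod q * cmod q ^ k \<le> cmod q" by (simp add: mult_left_le)
      then show ?thesis using assms by simp
    qed
    ultimately show False by simp
  qed
  then show ?thesis by (simp add: qpoch_def)
qed

definition U :: "complex \<Rightarrow> complex \<Rightarrow> complex \<Rightarrow> complex \<Rightarrow> complex \<Rightarrow> nat \<Rightarrow> complex" where
  "U a b c z q n = qpoch a q n * qpoch b q n / (qpoch q q n * qpoch c q n) * z ^ n"

lemma U_Suc:
  assumes "cmod q < 1" "\<And>n. qpoch c q n \<noteq> 0"
  shows "U a b c z q (Suc n) = U a b c z q n *
     ((1 - a * q ^ n) * (1 - b * q ^ n) * z / ((1 - q * q ^ n) * (1 - c * q ^ n)))"
proof -
  have h1: "qpoch q q (Suc n) \<noteq> 0" "qpoch c q (Suc n) \<noteq> 0"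
    using qpoch_qq_nonzero assms by auto
  then have "qpoch q q n \<noteq> 0" "1 - q * q ^ n \<noteq> 0" "qpoch c q n \<noteq> 0" "1 - c * q ^ n \<noteq> 0"
    by (auto simp: qpoch_Suc)
  then show ?thesis
    unfolding U_def qpoch_Suc by (simp add: field_simps)
qed

lemma U_summable:
  assumes "cmod q < 1" "cmod z < 1" "\<And>n. qpoch c q n \<noteq> 0"
  shows "summable (\<lambda>n. norm (U a b c z q n))"
proof -
  define \<rho> where "\<rho> n = cmod ((1 - a * q ^ n) * (1 - b * q ^ n) * z / ((1 - q * q ^ n) * (1 - c * q ^ n)))" for n
  have lim: "\<rho> \<longlonglongrightarrow> cmod ((1 - a * 0) * (1 - b * 0) * z / ((1 - q * 0) * (1 - c * 0)))"
    unfolding \<rho>_def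
    by (intro tendsto_intros LIMSEQ_power_zero assms) simp_all
  then have "\<rho> \<longlonglongrightarrow> cmod z" by simp
  moreover have "cmod z < (1 + cmod z) / 2" using assms by simp
  ultimately have "eventually (\<lambda>n. \<rho> n < (1 + cmod z) / 2) sequentially"
    by (rule order_tendstoD)
  then obtain N where N: "\<And>n. n \<ge> N \<Longrightarrow> \<rho> n < (1 + cmod z) / 2"
    by (auto simp: eventually_sequentially)
  show ?thesis
  proof (rule summable_ratio_test[of "(1 + cmod z) / 2" N])
    show "(1 + cmod z) / 2 < 1" using assms by simp
    fix n assume "N \<le> n"
    have "norm (norm (U a b c z q (Suc n))) = norm (U a b c z q n) * \<rho> n"
      unfolding U_Suc[OF assms(1,3)] \<rho>_def by (simp only: real_norm_def abs_norm_cancel norm_mult abs_mult)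
    also have "\<dots> \<le> norm (U a b c z q n) * ((1 + cmod z) / 2)"
      using N[OF \<open>N \<le> n\<close>] by (intro mult_left_mono) auto
    finally show "norm (norm (U a b c z q (Suc n))) \<le> (1 + cmod z) / 2 * norm (norm (U a b c z q n))"
      by (simp add: mult.commute)
  qed
qed

lemma qpoch_shift1: "qpoch c q (Suc n) = (1 - c) * qpoch (c * q) q n"
  using qpoch_add[of c q 1 n] by (simp add: qpoch_def)

lemma U_summable':
  assumes "cmod q < 1" "cmod z < 1" "\<And>n. qpoch c q n \<noteq> 0"
  shows "summable (U a b c z q)"
  using U_summable[OF assms] by (rule summable_norm_cancel)

lemma alg1:
  fixes a b z x q T :: complex
  assumes D: "1 - a*b*z*x \<noteq> 0" and Q: "1 - q*x \<noteq> 0"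
  shows "(1-a*b*z)*(1-z)*T - (1-b*z)*(1-a*z)*(T*x*(1-a*b*z)/(1-a*b*z*x))
     = -(1-a*b*z)*(T*((1-a*x)*(1-b*x)*z/((1-q*x)*(1-a*b*z*x))))*(1-q*x) - (-(1-a*b*z)*T*(1-x))"
proof -
  define D where "D = 1 - a*b*z*x"
  define P where "P = (1-a*x)*(1-b*x)*z"
  define W where "W = P/D"
  define V where "V = (1-b*z)*(1-a*z)*x/D"
  have h: "(1-z)*D - (1-b*z)*(1-a*z)*x = -P + (1-x)*D"
    unfolding D_def P_def by (simp add: algebra_simps)
  have h2: "(1-z) - V = -W + (1-x)"
  proof -
    have "(1-z) - V = ((1-z)*D - (1-b*z)*(1-a*z)*x)/D"
      using D by (simp add: V_def D_def diff_divide_distrib)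
    also have "\<dots> = (-P + (1-x)*D)/D" by (simp only: h)
    also have "\<dots> = -W + (1-x)"
    proof -
      have "D \<noteq> 0" using D by (simp add: D_def)
      then show ?thesis by (simp add: W_def diff_divide_distrib)
    qed
    finally show ?thesis .
  qed
  have l: "(1-a*b*z)*(1-z)*T - (1-b*z)*(1-a*z)*(T*x*(1-a*b*z)/(1-a*b*z*x)) = (1-a*b*z)*T*((1-z) - V)"
    by (simp add: D_def V_def algebra_simps)
  have c: "(T*((1-a*x)*(1-b*x)*z/((1-q*x)*(1-a*b*z*x))))*(1-q*x) = T*W"
    using Q by (simp add: D_def W_def P_def)
  have r: "-(1-a*b*z)*(T*((1-a*x)*(1-b*x)*z/((1-q*x)*(1-a*b*z*x))))*(1-q*x) = -(1-a*b*z)*(T*W)"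
    using c by (metis mult.assoc)
  show ?thesis unfolding l r h2 by (simp add: algebra_simps)
qed

lemma alg2:
  fixes X Qn Cn N D z q :: complex
  assumes "Qn \<noteq> 0" "Cn \<noteq> 0" "N \<noteq> 0" "D \<noteq> 0"
  shows "X / (Qn * (Cn * N / D)) * (z * q) ^ n = X / (Qn * Cn) * z ^ n * q ^ n * D / N"
  using assms by (simp add: field_simps power_mult_distrib)

lemma gauss_step:
  assumes q: "cmod q < 1" and z: "cmod z < 1" and c: "\<And>n. qpoch (a * b * z) q n \<noteq> 0"
  shows "(1 - a * b * z) * (1 - z) * suminf (U a b (a * b * z) z q)
       = (1 - b * z) * (1 - a * z) * suminf (U a b (a * b * (z * q)) (z * q) q)"
proof -
  define c where "c = a * b * z"
  define T where "T = U a b c z q"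
  define T' where "T' = U a b (a * b * (z * q)) (z * q) q"
  have c': "\<And>n. qpoch c q n \<noteq> 0" using c by (simp add: c_def)
  have c1: "1 - c \<noteq> 0" using c'[of 1] by (simp add: qpoch_def)
  have cn: "1 - c * q ^ n \<noteq> 0" for n using c'[of "Suc n"] by (simp add: qpoch_Suc)
  have qn: "1 - q * q ^ n \<noteq> 0" for n using qpoch_qq_nonzero[OF q, of "Suc n"] by (simp add: qpoch_Suc)
  have cq: "qpoch (c * q) q n \<noteq> 0" for n using c'[of "Suc n"] by (simp add: qpoch_shift1)
  have zq: "cmod (z * q) < 1"
  proof -
    have "cmod z * cmod q \<le> cmod z" using q by (intro mult_left_le) auto
    then show ?thesis using z by (simp add: norm_mult)
  qed
  have T'eq: "T' n = T n * q ^ n * (1 - c) / (1 - c * q ^ n)" for n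
  proof -
    have e: "qpoch (c * q) q n * (1 - c) = qpoch c q n * (1 - c * q ^ n)"
      using qpoch_shift1[of c q n] qpoch_Suc[of c q n] by (simp add: mult.commute)
    have "qpoch c q n \<noteq> 0" "qpoch q q n \<noteq> 0" using c' qpoch_qq_nonzero[OF q] by auto
    have e': "qpoch (a * b * (z * q)) q n = qpoch c q n * (1 - c * q ^ n) / (1 - c)"
      using e c1 by (simp add: c_def mult.assoc field_simps)
    show ?thesis
      unfolding T'_def T_def U_def e' using alg2 c1 cn[of n] \<open>qpoch c q n \<noteq> 0\<close> \<open>qpoch q q n \<noteq> 0\<close>
      by blast
  qed
  define G where "G n = - (1 - c) * T n * (1 - q ^ n)" for n
  have X: "(1 - c) * (1 - z) * T n - (1 - b * z) * (1 - a * z) * T' n = G (Suc n) - G n" for n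
  proof -
    have TS: "T (Suc n) = T n * ((1 - a * q ^ n) * (1 - b * q ^ n) * z / ((1 - q * q ^ n) * (1 - c * q ^ n)))"
      unfolding T_def by (rule U_Suc[OF q c'])
    show ?thesis
      unfolding G_def TS T'eq c_def power_Suc using cn[of n] qn[of n]
      by (intro alg1) (simp_all add: c_def)
  qed
  have sT: "summable T" unfolding T_def using U_summable'[OF q z c'] .
  have sT': "summable T'" unfolding T'_def using U_summable'[OF q zq cq] by (simp add: c_def mult.assoc)
  have "T \<longlonglongrightarrow> 0" using sT by (rule summable_LIMSEQ_zero)
  then have "G \<longlonglongrightarrow> - (1 - c) * 0 * (1 - 0)"
    unfolding G_def by (intro tendsto_intros LIMSEQ_power_zero q)
  then have "(\<lambda>n. G (Suc n) - G n) sums (0 - G 0)" by (intro telescope_sums) simp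
  then have s0: "(\<lambda>n. (1 - c) * (1 - z) * T n - (1 - b * z) * (1 - a * z) * T' n) sums 0"
    by (simp add: X G_def)
  have "(\<lambda>n. (1 - c) * (1 - z) * T n - (1 - b * z) * (1 - a * z) * T' n) sums
      ((1 - c) * (1 - z) * suminf T - (1 - b * z) * (1 - a * z) * suminf T')"
    by (intro sums_diff sums_mult summable_sums sT sT')
  from sums_unique2[OF this s0] show ?thesis
    by (simp add: T_def T'_def c_def)
qed

lemma norm_less_one_mult:
  fixes z q :: complex
  assumes "cmod z < 1" "cmod q \<le> 1"
  shows "cmod (z * q) < 1"
proof -
  have "cmod z * cmod q \<le> cmod z" using assms by (intro mult_left_le) auto
  then show ?thesis using assms by (simp add: norm_mult)
qed

lemma norm_qpow_le: "cmod q < 1 \<Longrightarrow> cmod z < 1 \<Longrightarrow> cmod (z * q ^ N) < 1"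
proof (induction N)
  case 0 then show ?case by simp
next
  case (Suc N)
  then have "cmod ((z * q ^ N) * q) < 1" using norm_less_one_mult[of "z * q ^ N" q] by auto
  then show ?case by (simp add: mult.assoc mult.commute mult.left_commute)
qed

lemma gauss_iter:
  assumes q: "cmod q < 1" and z: "cmod z < 1" and c: "\<And>n. qpoch (a * b * z) q n \<noteq> 0"
  shows "qpoch (a * b * z) q N * qpoch z q N * suminf (U a b (a * b * z) z q)
       = qpoch (b * z) q N * qpoch (a * z) q N * suminf (U a b (a * b * (z * q ^ N)) (z * q ^ N) q)"
proof (induction N)
  case 0 then show ?case by simp
next
  case (Suc N)
  have zN: "cmod (z * q ^ N) < 1" using q z by (rule norm_qpow_le)
  have cN: "qpoch (a * b * (z * q ^ N)) q n \<noteq> 0" for n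
    using c[of "N + n"] unfolding qpoch_add by (simp add: mult.assoc)
  have st: "(1 - a * b * (z * q ^ N)) * (1 - z * q ^ N) * suminf (U a b (a * b * (z * q ^ N)) (z * q ^ N) q)
       = (1 - b * (z * q ^ N)) * (1 - a * (z * q ^ N)) * suminf (U a b (a * b * (z * q ^ N * q)) (z * q ^ N * q) q)"
    by (rule gauss_step[OF q zN cN])
  have "qpoch (a * b * z) q (Suc N) * qpoch z q (Suc N) * suminf (U a b (a * b * z) z q)
      = (1 - a * b * (z * q ^ N)) * (1 - z * q ^ N) * (qpoch (a * b * z) q N * qpoch z q N * suminf (U a b (a * b * z) z q))"
    by (simp add: qpoch_Suc mult_ac)
  also have "\<dots> = qpoch (b * z) q N * qpoch (a * z) q N * ((1 - a * b * (z * q ^ N)) * (1 - z * q ^ N) * suminf (U a b (a * b * (z * q ^ N)) (z * q ^ N) q))"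
    unfolding Suc.IH by (simp add: mult_ac)
  also have "\<dots> = qpoch (b * z) q (Suc N) * qpoch (a * z) q (Suc N) * suminf (U a b (a * b * (z * q ^ Suc N)) (z * q ^ Suc N) q)"
    unfolding st by (simp add: qpoch_Suc mult_ac)
  finally show ?case .
qed

lemma qpoch_norm_lower:
  assumes "cmod q < 1"
  shows "norm (qpoch c q k) \<ge> 1 - cmod c * (\<Sum>j<k. cmod q ^ j)"
proof (induction k)
  case 0 then show ?case by simp
next
  case (Suc k)
  define L where "L = 1 - cmod c * (\<Sum>j<k. cmod q ^ j)"
  define e where "e = cmod c * cmod q ^ k"
  have e0: "e \<ge> 0" by (simp add: e_def)
  have L1: "L \<le> 1" by (simp add: L_def sum_nonneg)
  have f: "norm (1 - c * q ^ k) \<ge> 1 - e"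
  proof -
    have "norm (1::complex) - norm (c * q ^ k) \<le> norm (1 - c * q ^ k)" by (rule norm_triangle_ineq2)
    then show ?thesis by (simp add: e_def norm_mult norm_power)
  qed
  have goal: "norm (qpoch c q (Suc k)) \<ge> L - e"
  proof (cases "1 - e \<ge> 0")
    case True
    have "norm (qpoch c q (Suc k)) = norm (qpoch c q k) * norm (1 - c * q ^ k)"
      by (simp add: qpoch_Suc norm_mult)
    also have "\<dots> \<ge> L * (1 - e)"
    proof (cases "L \<ge> 0")
      case True
      then show ?thesis using Suc.IH f \<open>1 - e \<ge> 0\<close> unfolding L_def[symmetric]
        by (intro mult_mono) auto
    next
      case False
      then have "L * (1 - e) \<le> 0" using \<open>1 - e \<ge> 0\<close> by (simp add: mult_nonpos_nonneg)
      then show ?thesis by (meson norm_ge_zero mult_nonneg_nonneg order_trans)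
    qed
    finally have "norm (qpoch c q (Suc k)) \<ge> L * (1 - e)" .
    moreover have "L * (1 - e) \<ge> L - e"
    proof -
      have "e * (1 - L) \<ge> 0" using L1 e0 by simp
      moreover have "L * (1 - e) - (L - e) = e * (1 - L)" by (simp add: algebra_simps)
      ultimately show ?thesis by linarith
    qed
    ultimately show ?thesis by linarith
  next
    case False
    have "L - e \<le> 0" using False L1 by linarith
    then show ?thesis by (meson norm_ge_zero order_trans)
  qed
  then show ?case by (simp add: L_def e_def algebra_simps)
qed

lemma geom_partial_le:
  fixes x :: real
  assumes "0 \<le> x" "x < 1"
  shows "(\<Sum>j<k. x ^ j) \<le> 1 / (1 - x)"
proof -
  have "(\<Sum>j<k. x ^ j) = (1 - x ^ k) / (1 - x)" using assms by (simp add: sum_gp_strict)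
  also have "\<dots> \<le> 1 / (1 - x)" using assms by (intro divide_right_mono) auto
  finally show ?thesis .
qed

lemma qpoch_half:
  assumes q: "cmod q < 1" and c: "cmod c \<le> (1 - cmod q) / 2"
  shows "norm (qpoch c q k) \<ge> 1 / 2"
proof -
  have "cmod c * (\<Sum>j<k. cmod q ^ j) \<le> ((1 - cmod q) / 2) * (1 / (1 - cmod q))"
    using q c geom_partial_le[of "cmod q" k] by (intro mult_mono) (auto simp: sum_nonneg)
  also have "\<dots> = 1 / 2" using q by simp
  finally show ?thesis using qpoch_norm_lower[OF q, of c k] by linarith
qed

lemma gauss_limit:
  assumes q: "cmod q < 1" and z: "cmod z < 1"
  shows "(\<lambda>N. suminf (U a b (a * b * (z * q ^ N)) (z * q ^ N) q)) \<longlonglongrightarrow> 1"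
proof -
  define A where "A k N = U a b (a * b * (z * q ^ N)) (z * q ^ N) q k" for k N
  define B where "B k = qpoch a q k * qpoch b q k / (qpoch q q k * qpoch (a * b * (z * 0)) q k) * (z * 0) ^ k" for k
  define M where "M k = 2 * norm (U a b 0 z q k)" for k
  have lim: "(\<lambda>N. A k N) \<longlonglongrightarrow> B k" for k
    unfolding A_def B_def U_def qpoch_def
    by (intro tendsto_intros LIMSEQ_power_zero q) (simp add: qpoch_def[symmetric] qpoch_qq_nonzero[OF q])
  have Bsimp: "B = (\<lambda>k. if k = 0 then 1 else 0)"
    by (auto simp: B_def fun_eq_iff qpoch_def)
  have "(\<lambda>N. cmod (a * b * z) * cmod q ^ N) \<longlonglongrightarrow> cmod (a * b * z) * 0"
    by (intro tendsto_intros LIMSEQ_power_zero) (use q in simp)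
  moreover have "cmod (a * b * z) * 0 < (1 - cmod q) / 2" using q by simp
  ultimately have "eventually (\<lambda>N. cmod (a * b * z) * cmod q ^ N < (1 - cmod q) / 2) sequentially"
    by (rule order_tendstoD)
  then obtain N0 where N0: "\<And>N. N \<ge> N0 \<Longrightarrow> cmod (a * b * z) * cmod q ^ N < (1 - cmod q) / 2"
    by (auto simp: eventually_sequentially)
  have bound: "norm (A k N) \<le> M k" if "N \<ge> N0" for k N
  proof -
    define C where "C = qpoch (a * b * (z * q ^ N)) q k"
    have "cmod (a * b * (z * q ^ N)) \<le> (1 - cmod q) / 2"
      using N0[OF that] by (simp add: norm_mult norm_power mult.assoc)
    then have C: "norm C \<ge> 1 / 2" unfolding C_def by (rule qpoch_half[OF q])
    define X where "X = norm (qpoch a q k * qpoch b q k) / norm (qpoch q q k) * cmod z ^ k"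
    have X0: "X \<ge> 0" by (simp add: X_def)
    have qk: "(cmod q ^ N) ^ k \<le> 1" using q by (simp add: power_le_one)
    have "norm (A k N) = X * (cmod q ^ N) ^ k / norm C"
      by (simp add: A_def U_def C_def X_def norm_mult norm_divide norm_power power_mult_distrib field_simps)
    also have "\<dots> \<le> X * 1 / (1/2)"
      using X0 qk C by (intro frac_le mult_left_mono) auto
    also have "\<dots> = M k" by (simp add: M_def X_def U_def qpoch_def norm_mult norm_divide norm_power)
    finally show ?thesis .
  qed
  have ev: "eventually (\<lambda>(k, N). norm (A k N) \<le> M k) (sequentially \<times>\<^sub>F sequentially)"
    unfolding eventually_prod_sequentially using bound by (intro exI[of _ N0]) auto
  have sM: "summable M"
    unfolding M_def by (intro summable_mult U_summable q z) (simp add: qpoch_def)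
  have "(\<lambda>N. suminf (\<lambda>k. A k N)) \<longlonglongrightarrow> suminf B"
    using tannerys_theorem[OF lim ev sM] by simp
  moreover have "suminf B = 1"
    unfolding Bsimp using sums_single[of 0 "\<lambda>_. 1::complex"] by (simp add: sums_iff)
  ultimately show ?thesis by (simp add: A_def)
qed

lemma qgauss:
  assumes q: "cmod q < 1" and z: "cmod z < 1" and c: "\<And>n. qpoch (a * b * z) q n \<noteq> 0"
  shows "qpoch_inf (a * b * z) q * qpoch_inf z q * suminf (U a b (a * b * z) z q)
       = qpoch_inf (b * z) q * qpoch_inf (a * z) q"
proof -
  have l1: "(\<lambda>N. qpoch (a * b * z) q N * qpoch z q N * suminf (U a b (a * b * z) z q))
      \<longlonglongrightarrow> qpoch_inf (a * b * z) q * qpoch_inf z q * suminf (U a b (a * b * z) z q)"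
    by (intro tendsto_intros qpoch_LIMSEQ q)
  have l2: "(\<lambda>N. qpoch (b * z) q N * qpoch (a * z) q N * suminf (U a b (a * b * (z * q ^ N)) (z * q ^ N) q))
      \<longlonglongrightarrow> qpoch_inf (b * z) q * qpoch_inf (a * z) q * 1"
    by (intro tendsto_intros qpoch_LIMSEQ q gauss_limit z)
  show ?thesis using LIMSEQ_unique[OF l1 l2[folded gauss_iter[OF q z c]]] by simp
qed

lemma alg3:
  fixes \<beta> D q Q x X N Nq R Rq :: complex
  assumes "q * Q = 1" "x * X = 1" "N * Nq = 1" "R * Rq = 1" "1 - q * x \<noteq> 0" "1 - D * x \<noteq> 0"
  shows "(1 - D * Nq) * Rq * (\<beta> * ((1 - N * Q) * (1 - R * x) * q / ((1 - q * x) * (1 - D * x))))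
       - (1 - D * (Rq * Nq)) * (\<beta> * ((1 - N * x) * (1 - R * x) * q / ((1 - q * x) * (1 - D * x))))
       = \<beta> * ((1 - N * x) * (1 - R * x) * q / ((1 - q * x) * (1 - D * x))) * (Rq * q * (X * Q * Q) - 1)
         - \<beta> * (Rq * q * (X * Q) - 1)"
proof -
  have q0: "q \<noteq> 0" "x \<noteq> 0" "Nq \<noteq> 0" "Rq \<noteq> 0" using assms(1-4) by auto
  have Q: "Q = 1 / q" and X: "X = 1 / x" and N: "N = 1 / Nq" and R: "R = 1 / Rq"
    using assms(1-4) q0 by (simp_all add: eq_divide_eq mult.commute)
  define E where "E = (1 - q * x) * (1 - D * x)"
  have E: "E \<noteq> 0" using assms(5,6) by (simp add: E_def)
  have key: "(1 - D * Nq) * Rq * ((1 - N * Q) * (1 - R * x) * q)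
       - (1 - D * (Rq * Nq)) * ((1 - N * x) * (1 - R * x) * q)
       = ((1 - N * x) * (1 - R * x) * q) * (Rq * q * (X * Q * Q) - 1) - E * (Rq * q * (X * Q) - 1)"
    unfolding Q X N R E_def using q0 by (simp add: field_simps)
  define P1 where "P1 = (1 - N * Q) * (1 - R * x) * q"
  define P2 where "P2 = (1 - N * x) * (1 - R * x) * q"
  define c1 where "c1 = Rq * q * (X * Q * Q) - 1"
  define c2 where "c2 = Rq * q * (X * Q) - 1"
  define a1 where "a1 = (1 - D * Nq) * Rq"
  define a2 where "a2 = 1 - D * (Rq * Nq)"
  have key': "a1 * P1 - a2 * P2 = P2 * c1 - E * c2"
    using key unfolding P1_def P2_def c1_def c2_def a1_def a2_def by simp
  have "a1 * (\<beta> * (P1 / E)) - a2 * (\<beta> * (P2 / E)) = \<beta> * (P2 / E) * c1 - \<beta> * c2"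
  proof -
    have "a1 * (\<beta> * (P1 / E)) - a2 * (\<beta> * (P2 / E)) = \<beta> * (a1 * P1 - a2 * P2) / E"
      by (simp add: algebra_simps diff_divide_distrib)
    also have "\<dots> = \<beta> * (P2 * c1 - E * c2) / E" by (simp only: key')
    also have "\<dots> = \<beta> * (P2 / E) * c1 - \<beta> * c2" using E by (simp add: field_simps)
    finally show ?thesis .
  qed
  then show ?thesis unfolding P1_def P2_def c1_def c2_def a1_def a2_def E_def by (simp add: mult.assoc)
qed

definition tCV :: "complex \<Rightarrow> complex \<Rightarrow> nat \<Rightarrow> complex \<Rightarrow> nat \<Rightarrow> nat \<Rightarrow> complex" where
  "tCV q Q r D n k = qpoch (Q ^ n) q k * qpoch (Q ^ r) q k / (qpoch q q k * qpoch D q k) * q ^ k"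

lemma qpoch_vanish:
  assumes "q * Q = 1" "n < k"
  shows "qpoch (Q ^ n) q k = 0"
proof -
  have "1 - Q ^ n * q ^ n = 0" using assms(1) by (simp add: power_mult_distrib[symmetric] mult.commute)
  then show ?thesis unfolding qpoch_def using assms(2) by (intro prod_zero) auto
qed

lemma tCV_vanish: "q * Q = 1 \<Longrightarrow> n < k \<Longrightarrow> tCV q Q r D n k = 0"
  by (simp add: tCV_def qpoch_vanish)

lemma tCV_Suc:
  assumes q: "cmod q < 1" and D: "\<And>k. qpoch D q k \<noteq> 0"
  shows "tCV q Q r D n (Suc j) = tCV q Q r D n j *
     ((1 - Q ^ n * q ^ j) * (1 - Q ^ r * q ^ j) * q / ((1 - q * q ^ j) * (1 - D * q ^ j)))"
proof -
  have "qpoch q q (Suc j) \<noteq> 0" "qpoch D q (Suc j) \<noteq> 0" using qpoch_qq_nonzero[OF q] D by auto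
  then have "qpoch q q j \<noteq> 0" "1 - q * q ^ j \<noteq> 0" "qpoch D q j \<noteq> 0" "1 - D * q ^ j \<noteq> 0"
    by (auto simp: qpoch_Suc)
  then show ?thesis unfolding tCV_def qpoch_Suc by (simp add: field_simps)
qed

lemma tCV_Suc_n:
  assumes q: "cmod q < 1" and D: "\<And>k. qpoch D q k \<noteq> 0" and qQ: "q * Q = 1"
  shows "tCV q Q r D (Suc n) (Suc j) = tCV q Q r D n j *
     ((1 - Q ^ n * Q) * (1 - Q ^ r * q ^ j) * q / ((1 - q * q ^ j) * (1 - D * q ^ j)))"
proof -
  have "qpoch q q (Suc j) \<noteq> 0" "qpoch D q (Suc j) \<noteq> 0" using qpoch_qq_nonzero[OF q] D by auto
  then have nz: "qpoch q q j \<noteq> 0" "1 - q * q ^ j \<noteq> 0" "qpoch D q j \<noteq> 0" "1 - D * q ^ j \<noteq> 0"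
    by (auto simp: qpoch_Suc)
  have e1: "Q ^ Suc n * q = Q ^ n" using qQ by (simp add: power_Suc2 mult.assoc mult.commute[of Q q])
  have e2: "qpoch (Q ^ Suc n) q (Suc j) = (1 - Q ^ n * Q) * qpoch (Q ^ n) q j"
    using qpoch_shift1[of "Q ^ Suc n" q j, unfolded e1] by (simp only: power_Suc2)
  show ?thesis unfolding tCV_def e2 qpoch_Suc[of q q] qpoch_Suc[of D q] qpoch_Suc[of "Q ^ r" q]
    using nz by (simp add: field_simps)
qed

lemma CV_rec:
  assumes q: "cmod q < 1" and D: "\<And>k. qpoch D q k \<noteq> 0" and qQ: "q * Q = 1"
  shows "(1 - D * q ^ n) * q ^ r * (\<Sum>k\<le>Suc n. tCV q Q r D (Suc n) k)
       = (1 - D * (q ^ r * q ^ n)) * (\<Sum>k\<le>n. tCV q Q r D n k)"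
proof -
  define G where "G k = (if k = 0 then 0 else tCV q Q r D n (k - 1) * (q ^ r * q * (Q ^ (k - 1) * Q) - 1))" for k
  define L where "L k = (1 - D * q ^ n) * q ^ r * tCV q Q r D (Suc n) k - (1 - D * (q ^ r * q ^ n)) * tCV q Q r D n k" for k
  have GS: "G (Suc k) = tCV q Q r D n k * (q ^ r * q * (Q ^ k * Q) - 1)" for k
    by (simp add: G_def)
  have LG: "L k = G (Suc k) - G k" for k
  proof (cases k)
    case 0
    then show ?thesis using qQ by (simp add: L_def G_def tCV_def algebra_simps)
  next
    case (Suc j)
    have nz: "1 - q * q ^ j \<noteq> 0" "1 - D * q ^ j \<noteq> 0"
      using qpoch_qq_nonzero[OF q, of "Suc j"] D[of "Suc j"] by (auto simp: qpoch_Suc)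
    have a: "q ^ j * Q ^ j = 1" "Q ^ n * q ^ n = 1" "Q ^ r * q ^ r = 1"
      using qQ by (simp_all add: power_mult_distrib[symmetric] mult.commute)
    show ?thesis
      unfolding L_def GS Suc tCV_Suc_n[OF q D qQ]
      unfolding tCV_Suc[OF q D]
      using alg3[OF qQ a(1) a(2) a(3) nz, of "tCV q Q r D n j"]
      by (simp add: power_Suc2 mult_ac)
  qed
  have "(\<Sum>k<Suc (Suc n). L k) = G (Suc (Suc n)) - G 0"
    unfolding LG by (rule sum_lessThan_telescope)
  also have "\<dots> = 0" by (simp add: G_def tCV_vanish[OF qQ])
  finally have s0: "(\<Sum>k<Suc (Suc n). L k) = 0" .
  have "(\<Sum>k<Suc (Suc n). L k) = (1 - D * q ^ n) * q ^ r * (\<Sum>k\<le>Suc n. tCV q Q r D (Suc n) k)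
       - (1 - D * (q ^ r * q ^ n)) * (\<Sum>k\<le>Suc n. tCV q Q r D n k)"
    unfolding L_def sum_subtractf sum_distrib_left[symmetric] lessThan_Suc_atMost ..
  also have "(\<Sum>k\<le>Suc n. tCV q Q r D n k) = (\<Sum>k\<le>n. tCV q Q r D n k)"
    by (simp add: tCV_vanish[OF qQ])
  finally show ?thesis using s0 by simp
qed

lemma CV:
  assumes q: "cmod q < 1" and D: "\<And>k. qpoch D q k \<noteq> 0" and qQ: "q * Q = 1"
  shows "qpoch (D * q ^ r) q n = qpoch D q n * q ^ (r * n) * (\<Sum>k\<le>n. tCV q Q r D n k)"
proof (induction n)
  case 0 then show ?case by (simp add: tCV_def)
next
  case (Suc n)
  have "qpoch (D * q ^ r) q (Suc n) = qpoch D q n * q ^ (r * n) * ((1 - D * (q ^ r * q ^ n)) * (\<Sum>k\<le>n. tCV q Q r D n k))"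
    by (simp add: qpoch_Suc Suc.IH mult.assoc)
  also have "\<dots> = qpoch D q n * q ^ (r * n) * ((1 - D * q ^ n) * q ^ r * (\<Sum>k\<le>Suc n. tCV q Q r D (Suc n) k))"
    by (simp only: CV_rec[OF q D qQ])
  also have "\<dots> = qpoch D q (Suc n) * q ^ (r * Suc n) * (\<Sum>k\<le>Suc n. tCV q Q r D (Suc n) k)"
    by (simp add: qpoch_Suc power_add mult_ac)
  finally show ?case .
qed

definition Wp :: "complex \<Rightarrow> nat \<Rightarrow> complex" where
  "Wp Q k = (\<Prod>i<k. - (Q ^ Suc i))"

lemma pow_inv: "q * Q = 1 \<Longrightarrow> Q ^ s * q ^ s = (1::complex)"
proof -
  assume "q * Q = 1"
  then have "Q * q = 1" by (simp add: mult.commute)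
  have "Q ^ s * q ^ s = (Q * q) ^ s" by (simp only: power_mult_distrib)
  also have "\<dots> = 1" using \<open>Q * q = 1\<close> by simp
  finally show ?thesis .
qed

lemma Qq_pow: "(q::complex) * Q = 1 \<Longrightarrow> j \<le> N \<Longrightarrow> Q ^ N * q ^ j = Q ^ (N - j)"
proof -
  assume qQ: "q * Q = 1" and j: "j \<le> N"
  have "Q ^ N = Q ^ (N - j + j)" using j by simp
  also have "\<dots> = Q ^ (N - j) * Q ^ j" by (rule power_add)
  finally have "Q ^ N = Q ^ (N - j) * Q ^ j" .
  moreover have "Q ^ j * q ^ j = 1" using qQ by (rule pow_inv)
  ultimately show ?thesis by (simp add: mult.assoc)
qed

lemma L1:
  assumes qQ: "q * Q = 1"
  shows "qpoch (Q ^ (m + k)) q k = Q ^ (m * k) * Wp Q k * qpoch (q * q ^ m) q k"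
proof -
  have "qpoch (Q ^ (m + k)) q k = (\<Prod>j<k. (\<lambda>i. 1 - Q ^ (m + Suc i)) (k - Suc j))"
    unfolding qpoch_def
  proof (rule prod.cong[OF refl])
    fix j assume "j \<in> {..<k}"
    then have e: "m + k - j = m + Suc (k - Suc j)" by auto
    have "Q ^ (m + k) * q ^ j = Q ^ (m + k - j)" using \<open>j \<in> {..<k}\<close> by (intro Qq_pow[OF qQ]) auto
    then have "Q ^ (m + k) * q ^ j = Q ^ (m + Suc (k - Suc j))" unfolding e .
    then show "1 - Q ^ (m + k) * q ^ j = (\<lambda>i. 1 - Q ^ (m + Suc i)) (k - Suc j)" by simp
  qed
  also have "\<dots> = (\<Prod>i<k. 1 - Q ^ (m + Suc i))" by (rule prod.nat_diff_reindex)
  also have "\<dots> = (\<Prod>i<k. (Q ^ m * - (Q ^ Suc i)) * (1 - (q * q ^ m) * q ^ i))"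
  proof (rule prod.cong[OF refl])
    fix i
    have h: "Q ^ (m + Suc i) * q ^ (m + Suc i) = 1" using qQ by (rule pow_inv)
    have p1: "Q ^ (m + Suc i) = Q ^ m * Q ^ Suc i" by (simp only: power_add)
    have p2: "q ^ (m + Suc i) = (q * q ^ m) * q ^ i" by (simp add: power_add mult_ac)
    have "(Q ^ m * - (Q ^ Suc i)) * (1 - (q * q ^ m) * q ^ i) = Q ^ (m + Suc i) * q ^ (m + Suc i) - Q ^ (m + Suc i)"
      unfolding p1 p2 by (simp add: algebra_simps)
    then show "1 - Q ^ (m + Suc i) = (Q ^ m * - (Q ^ Suc i)) * (1 - (q * q ^ m) * q ^ i)"
      unfolding h by simp
  qed
  also have "\<dots> = Q ^ (m * k) * Wp Q k * qpoch (q * q ^ m) q k"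
    unfolding prod.distrib prod_constant card_lessThan Wp_def qpoch_def power_mult ..
  finally show ?thesis .
qed

lemma L2:
  assumes qQ: "q * Q = 1" and w: "w \<noteq> 0"
  shows "qpoch (w * Q ^ k) q k = w ^ k * Wp Q k * qpoch (q / w) q k"
proof -
  have "qpoch (w * Q ^ k) q k = (\<Prod>j<k. (\<lambda>i. 1 - w * Q ^ Suc i) (k - Suc j))"
    unfolding qpoch_def
  proof (rule prod.cong[OF refl])
    fix j assume "j \<in> {..<k}"
    then have e: "k - j = Suc (k - Suc j)" by auto
    have "Q ^ k * q ^ j = Q ^ (Suc (k - Suc j))" using Qq_pow[OF qQ, of j k] e by simp
    then show "1 - w * Q ^ k * q ^ j = (\<lambda>i. 1 - w * Q ^ Suc i) (k - Suc j)" by (simp add: mult.assoc)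
  qed
  also have "\<dots> = (\<Prod>i<k. 1 - w * Q ^ Suc i)" by (rule prod.nat_diff_reindex)
  also have "\<dots> = (\<Prod>i<k. (w * - (Q ^ Suc i)) * (1 - (q / w) * q ^ i))"
  proof (rule prod.cong[OF refl])
    fix i
    have h: "Q ^ Suc i * q ^ Suc i = 1" using qQ by (rule pow_inv)
    have "(w * - (Q ^ Suc i)) * (1 - (q / w) * q ^ i) = Q ^ Suc i * q ^ Suc i - w * Q ^ Suc i"
      using w by (simp add: algebra_simps)
    then show "1 - w * Q ^ Suc i = (w * - (Q ^ Suc i)) * (1 - (q / w) * q ^ i)"
      unfolding h by simp
  qed
  also have "\<dots> = w ^ k * Wp Q k * qpoch (q / w) q k"
    by (simp only: prod.distrib prod_constant card_lessThan Wp_def qpoch_def)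
  finally show ?thesis .
qed

lemma alg4:
  fixes a1 a2 b1 b2 c1 c2 p1 p2 pk d r1 W Qmk wm wk qk :: complex
  assumes "p1 \<noteq> 0" "p2 \<noteq> 0" "c1 \<noteq> 0" "c2 \<noteq> 0" "pk \<noteq> 0" "d \<noteq> 0"
  shows "(a1 * a2) * (b1 * b2) / ((p1 * p2) * (c1 * c2)) * (wk * wm) * ((Qmk * W * p2) * r1 / (pk * d) * qk)
       = (a1 * b1 / c1 * wk * W * r1 * qk / (pk * d)) * (a2 * b2 / (p1 * c2) * (wm * Qmk))"
  using assms by (simp add: field_simps)

lemma alg5:
  fixes a1 b1 c1 r1 W qk pk d IA IB IC Iw wk qw S :: complex
  assumes "c1 \<noteq> 0" "wk \<noteq> 0" "W \<noteq> 0" "qw \<noteq> 0" "Iw \<noteq> 0" "IC \<noteq> 0" "pk \<noteq> 0" "d \<noteq> 0"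
    and S: "(IC / c1) * (wk * W * qw * Iw) * S = IB * IA"
  shows "(a1 * b1 / c1 * wk * W * r1 * qk / (pk * d)) * S
       = IA * IB / (Iw * IC) * (a1 * r1 * b1 / (pk * (qw * d)) * qk)"
proof -
  have "S = IB * IA * c1 / (IC * (wk * W * qw * Iw))"
    using S assms(1-6) by (simp add: field_simps)
  then show ?thesis using assms(1-8) by (simp add: field_simps)
qed

lemma Wp_nonzero: "Q \<noteq> 0 \<Longrightarrow> Wp Q k \<noteq> 0"
  by (simp add: Wp_def)

lemma ksum:
  fixes q Q A B C D w :: complex and r k :: nat
  assumes q: "cmod q < 1" and qQ: "q * Q = 1" and C: "C = A * B * w" and w: "w \<noteq> 0"
    and Cn: "\<And>n. qpoch C q n \<noteq> 0" and Dn: "\<And>n. qpoch D q n \<noteq> 0"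
    and wn: "\<And>n. qpoch (q / w) q n \<noteq> 0"
    and Cinf: "qpoch_inf C q \<noteq> 0" and winf: "qpoch_inf w q \<noteq> 0"
    and z: "cmod (w * Q ^ r) < 1" and k: "k \<le> r"
  shows "(\<lambda>n. qpoch A q n * qpoch B q n / (qpoch q q n * qpoch C q n) * w ^ n * tCV q Q r D n k) sums
     (qpoch_inf (A * w) q * qpoch_inf (B * w) q / (qpoch_inf w q * qpoch_inf C q) *
      (qpoch A q k * qpoch (Q ^ r) q k * qpoch B q k / (qpoch q q k * (qpoch (q / w) q k * qpoch D q k)) * q ^ k))"
proof -
  define g where "g n = qpoch A q n * qpoch B q n / (qpoch q q n * qpoch C q n) * w ^ n * tCV q Q r D n k" for n
  define a' where "a' = A * q ^ k"
  define b' where "b' = B * q ^ k"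
  define z' where "z' = w * Q ^ k"
  have qk: "q ^ k * Q ^ k = 1" using pow_inv[OF qQ, of k] by (simp add: mult.commute)
  have Q0: "Q \<noteq> 0" using qQ by auto
  have c': "a' * b' * z' = C * q ^ k"
  proof -
    have "a' * b' * z' = A * B * w * (q ^ k * Q ^ k) * q ^ k" by (simp add: a'_def b'_def z'_def mult_ac)
    then show ?thesis using qk C by simp
  qed
  have bz: "b' * z' = B * w" using qk by (simp add: b'_def z'_def mult_ac)
  have az: "a' * z' = A * w" using qk by (simp add: a'_def z'_def mult_ac)
  define coef where "coef = qpoch A q k * qpoch B q k / qpoch C q k * w ^ k * Wp Q k * qpoch (Q ^ r) q k * q ^ k / (qpoch q q k * qpoch D q k)"
  have g0: "g n = 0" if "n < k" for n
    using tCV_vanish[OF qQ that] by (simp add: g_def)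
  have gshift: "g (m + k) = coef * U a' b' (a' * b' * z') z' q m" for m
  proof -
    have nz: "qpoch q q m \<noteq> 0" "qpoch (q * q ^ m) q k \<noteq> 0" "qpoch C q k \<noteq> 0" "qpoch (C * q ^ k) q m \<noteq> 0"
      "qpoch q q k \<noteq> 0" "qpoch D q k \<noteq> 0"
      using qpoch_qq_nonzero[OF q, of "m + k"] Cn[of "k + m"] qpoch_qq_nonzero[OF q, of k] Dn[of k]
        qpoch_qq_nonzero[OF q, of m]
      by (auto simp: qpoch_add)
    have zm: "z' ^ m = w ^ m * Q ^ (m * k)" by (simp add: z'_def power_mult_distrib power_mult mult.commute[of m k])
    have hA: "qpoch A q (m + k) = qpoch A q k * qpoch (A * q ^ k) q m"
      using qpoch_add[of A q k m] by (simp add: add.commute)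
    have hB: "qpoch B q (m + k) = qpoch B q k * qpoch (B * q ^ k) q m"
      using qpoch_add[of B q k m] by (simp add: add.commute)
    have hC: "qpoch C q (m + k) = qpoch C q k * qpoch (C * q ^ k) q m"
      using qpoch_add[of C q k m] by (simp add: add.commute)
    have hq: "qpoch q q (m + k) = qpoch q q m * qpoch (q * q ^ m) q k"
      by (rule qpoch_add)
    have hw: "w ^ (m + k) = w ^ k * w ^ m" by (simp add: power_add mult.commute)
    show ?thesis
      unfolding g_def tCV_def U_def coef_def c' zm L1[OF qQ] a'_def[symmetric] b'_def[symmetric] hA hB hC hq hw
      by (rule alg4) (use nz in auto)
  qed
  have z'r: "z' = (w * Q ^ r) * q ^ (r - k)"
    using Qq_pow[OF qQ, of "r - k" r] k by (simp add: z'_def mult.assoc)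
  have z1: "cmod z' < 1"
  proof -
    have "cmod z' = cmod (w * Q ^ r) * cmod q ^ (r - k)" by (simp add: z'r norm_mult norm_power)
    also have "\<dots> \<le> cmod (w * Q ^ r)" using q by (intro mult_left_le power_le_one) auto
    finally show ?thesis using z by simp
  qed
  have cn: "qpoch (a' * b' * z') q n \<noteq> 0" for n
    using Cn[of "k + n"] unfolding c' qpoch_add by simp
  define S where "S = suminf (U a' b' (a' * b' * z') z' q)"
  have gauss: "qpoch_inf (a' * b' * z') q * qpoch_inf z' q * S = qpoch_inf (b' * z') q * qpoch_inf (a' * z') q"
    unfolding S_def by (rule qgauss[OF q z1 cn])
  have sU: "summable (U a' b' (a' * b' * z') z' q)" by (rule U_summable'[OF q z1 cn])
  have "(\<lambda>m. g (m + k)) sums (coef * S)"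
    unfolding gshift S_def by (intro sums_mult summable_sums sU)
  then have gs: "g sums (coef * S)"
    using sums_iff_shift[of g k "coef * S"] g0 by simp
  have IC: "qpoch_inf (a' * b' * z') q = qpoch_inf C q / qpoch C q k"
    using qpoch_inf_shift[OF q, of C k] Cn[of k] unfolding c' by (simp add: field_simps)
  have zqk: "z' * q ^ k = w" using qk by (simp add: z'_def mult.assoc mult.commute)
  have Iz: "qpoch_inf z' q = w ^ k * Wp Q k * qpoch (q / w) q k * qpoch_inf w q"
  proof -
    have "qpoch_inf z' q = qpoch z' q k * qpoch_inf (z' * q ^ k) q" by (rule qpoch_inf_shift[OF q])
    then show ?thesis unfolding zqk unfolding z'_def L2[OF qQ w] .
  qed
  have Seq: "(qpoch_inf C q / qpoch C q k) * (w ^ k * Wp Q k * qpoch (q / w) q k * qpoch_inf w q) * S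
      = qpoch_inf (B * w) q * qpoch_inf (A * w) q"
    using gauss unfolding IC Iz bz az .
  have "coef * S = qpoch_inf (A * w) q * qpoch_inf (B * w) q / (qpoch_inf w q * qpoch_inf C q) *
      (qpoch A q k * qpoch (Q ^ r) q k * qpoch B q k / (qpoch q q k * (qpoch (q / w) q k * qpoch D q k)) * q ^ k)"
    unfolding coef_def
    by (rule alg5[OF Cn _ Wp_nonzero[OF Q0] wn winf Cinf qpoch_qq_nonzero[OF q] Dn Seq]) (use w in simp)
  then show ?thesis using gs unfolding g_def by simp
qed

lemma tCV_vanish_r: "q * Q = 1 \<Longrightarrow> r < k \<Longrightarrow> tCV q Q r D n k = 0"
  by (simp add: tCV_def qpoch_vanish)

theorem mainTheorem12:
  fixes q x y a b t u v :: complex and r :: nat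
  assumes "0 < cmod q" and "cmod q < 1"
    and "x \<noteq> 0" and "a \<noteq> 0" and "b \<noteq> 0" and "t \<noteq> 0" and "u \<noteq> 0"
    and "v / u = q powi (- int r)"
    and "\<And>n. qpoch (y * q / a) q n \<noteq> 0"
    and "\<And>n. qpoch (q / (a * u * t)) q n \<noteq> 0"
    and "\<And>n. qpoch (q / (x * b * t)) q n \<noteq> 0"
    and "qpoch_inf (x * b * t) q \<noteq> 0" and "qpoch_inf (y * q / a) q \<noteq> 0"
    and "cmod (x * b * v * t / u) < 1"
  shows "basic_hyp [y / x, q / (a * b * t), q / (a * v * t)] [y * q / a, q / (a * u * t)] q
            (x * b * v * t / u)
       = (qpoch_inf (y * b * t) q * qpoch_inf (x * q / a) q)
         / (qpoch_inf (x * b * t) q * qpoch_inf (y * q / a) q)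
         * basic_hyp [y / x, v / u, q / (a * b * t)] [q / (x * b * t), q / (a * u * t)] q q"
proof -
  define Q where "Q = inverse q"
  have q0: "q \<noteq> 0" using assms(1) by auto
  have qQ: "q * Q = 1" using q0 by (simp add: Q_def)
  have q1: "cmod q < 1" by fact
  have vu: "v / u = Q ^ r" using assms(8) by (simp add: power_int_minus Q_def power_inverse)
  have v: "v = u * Q ^ r" using vu \<open>u \<noteq> 0\<close> by (simp add: field_simps)
  define A where "A = y / x"
  define B where "B = q / (a * b * t)"
  define C where "C = y * q / a"
  define D where "D = q / (a * u * t)"
  define w where "w = x * b * t"
  have w0: "w \<noteq> 0" using assms(3,5,6) by (simp add: w_def)
  have CABw: "C = A * B * w" using assms(3-6) by (simp add: A_def B_def C_def w_def field_simps)
  have qrQ: "q ^ r * Q ^ r = 1" using pow_inv[OF qQ, of r] by (simp add: mult.commute)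
  have D': "q / (a * v * t) = D * q ^ r"
  proof -
    have Qr: "Q ^ r = inverse (q ^ r)" by (simp add: Q_def power_inverse)
    show ?thesis using assms(3-7) q0 unfolding v D_def Qr by (simp add: field_simps)
  qed
  have z0: "x * b * v * t / u = w * Q ^ r" using assms(7) by (simp add: v w_def field_simps)
  have qw: "q / (x * b * t) = q / w" by (simp add: w_def)
  have Aw: "y * b * t = A * w" using assms(3) by (simp add: A_def w_def field_simps)
  have Bw: "x * q / a = B * w" using assms(4-6) by (simp add: B_def w_def field_simps)
  have Cn: "\<And>n. qpoch C q n \<noteq> 0" using assms(9) by (simp add: C_def)
  have Dn: "\<And>n. qpoch D q n \<noteq> 0" using assms(10) by (simp add: D_def)
  have wn: "\<And>n. qpoch (q / w) q n \<noteq> 0" using assms(11) by (simp add: w_def)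
  have Cinf: "qpoch_inf C q \<noteq> 0" using assms(13) by (simp add: C_def)
  have winf: "qpoch_inf w q \<noteq> 0" using assms(12) by (simp add: w_def)
  have z: "cmod (w * Q ^ r) < 1" using assms(14) unfolding z0 .
  define g where "g k n = qpoch A q n * qpoch B q n / (qpoch q q n * qpoch C q n) * w ^ n * tCV q Q r D n k" for k n
  define F where "F = qpoch_inf (A * w) q * qpoch_inf (B * w) q / (qpoch_inf w q * qpoch_inf C q)"
  define R where "R k = qpoch A q k * qpoch (Q ^ r) q k * qpoch B q k / (qpoch q q k * (qpoch (q / w) q k * qpoch D q k)) * q ^ k" for k
  have gs: "g k sums (F * R k)" if "k \<in> {..r}" for k
    unfolding g_def F_def R_def using that
    by (intro ksum[OF q1 qQ CABw w0 Cn Dn wn Cinf winf z]) auto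
  have phiL: "phi_term [A, B, D * q ^ r] [C, D] q (w * Q ^ r) n = (\<Sum>k\<le>r. g k n)" for n
  proof -
    define St where "St = (\<Sum>k\<le>r. tCV q Q r D n k)"
    have s1: "(\<Sum>k\<le>n. tCV q Q r D n k) = (\<Sum>k\<le>n + r. tCV q Q r D n k)"
      by (rule sum.mono_neutral_left) (auto simp: tCV_vanish[OF qQ])
    have s2: "(\<Sum>k\<le>r. tCV q Q r D n k) = (\<Sum>k\<le>n + r. tCV q Q r D n k)"
      by (rule sum.mono_neutral_left) (auto simp: tCV_vanish_r[OF qQ])
    have cv: "qpoch (D * q ^ r) q n = qpoch D q n * q ^ (r * n) * St"
      unfolding St_def s2 s1[symmetric] by (rule CV[OF q1 Dn qQ])
    have pw: "(w * Q ^ r) ^ n * q ^ (r * n) = w ^ n"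
    proof -
      have e: "(Q ^ r) ^ n = Q ^ (r * n)" by (rule power_mult[symmetric])
      have "(w * Q ^ r) ^ n * q ^ (r * n) = w ^ n * (Q ^ (r * n) * q ^ (r * n))"
        unfolding power_mult_distrib e by (simp add: mult_ac)
      then show ?thesis using pow_inv[OF qQ, of "r * n"] by simp
    qed
    have "phi_term [A, B, D * q ^ r] [C, D] q (w * Q ^ r) n
        = qpoch A q n * qpoch B q n * qpoch (D * q ^ r) q n / (qpoch q q n * (qpoch C q n * qpoch D q n)) * (w * Q ^ r) ^ n"
      by (simp add: phi_term_def mult.assoc)
    also have "\<dots> = qpoch A q n * qpoch B q n / (qpoch q q n * qpoch C q n) * ((w * Q ^ r) ^ n * q ^ (r * n)) * St"
      unfolding cv using Dn[of n] by (simp add: field_simps)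
    also have "\<dots> = (\<Sum>k\<le>r. g k n)"
      unfolding pw St_def g_def by (simp add: sum_distrib_left sum_divide_distrib mult_ac)
    finally show ?thesis .
  qed
  have phiR: "phi_term [A, Q ^ r, B] [q / w, D] q q k = R k" for k
    by (simp add: phi_term_def R_def mult.assoc)
  have R0: "R k = 0" if "k \<notin> {..r}" for k
    using qpoch_vanish[OF qQ, of r k] that by (simp add: R_def)
  have "basic_hyp [A, B, D * q ^ r] [C, D] q (w * Q ^ r) = (\<Sum>n. \<Sum>k\<le>r. g k n)"
    unfolding basic_hyp_def phiL ..
  also have "\<dots> = (\<Sum>k\<le>r. \<Sum>n. g k n)"
    by (rule suminf_sum) (use gs sums_summable in blast)
  also have "\<dots> = (\<Sum>k\<le>r. F * R k)"
    using gs by (intro sum.cong refl) (simp add: sums_iff)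
  also have "\<dots> = F * (\<Sum>k\<le>r. R k)" by (simp add: sum_distrib_left)
  also have "(\<Sum>k\<le>r. R k) = (\<Sum>k. R k)"
    by (rule suminf_finite[symmetric]) (use R0 in auto)
  also have "(\<Sum>k. R k) = basic_hyp [A, Q ^ r, B] [q / w, D] q q"
    unfolding basic_hyp_def phiR ..
  finally have main: "basic_hyp [A, B, D * q ^ r] [C, D] q (w * Q ^ r) = F * basic_hyp [A, Q ^ r, B] [q / w, D] q q" .
  have fA: "y / x = A" and fB: "q / (a * b * t) = B" and fC: "y * q / a = C" and fD: "q / (a * u * t) = D"
    and fw: "x * b * t = w"
    by (simp_all add: A_def B_def C_def D_def w_def)
  show ?thesis
    unfolding D' z0 qw Aw Bw vu fA fB fC fD fw
    using main unfolding F_def .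
qed

end
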